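(* Let $r\ge 3$, $k\ge 2$, let $H=(V,\mathcal{E})$ be an $r$-minimal hypergraph and let $c$ be a $k$-coloring of $H$. For $v\in V$ define: $d_1^i(v)=|\{e\in\mathcal{E}(v): |c(e)|=2,\ c(e\setminus\{v\})=\{i\}\}|$ for each color $i\ne c(v)$, and $d_1(v)=\sum_{i\ne c(v)}d_1^i(v)$; $d_2(v)=|\{e\in\mathcal{E}(v): |c(e)|=1\}|$; $d_3(v)=|\{e\in\mathcal{E}(v): |c(e)|=2 \text{ and there is } v'\in e,\ v'\ne v, \text{ with } |c(e\setminus\{v'\})|=1\}|$; $d_4(v)=|\mathcal{E}(v)|-(d_1(v)+d_2(v)+d_3(v))$; and $D_j=\sum_{v\in V}d_j(v)$ for $j=1,2,3,4$. Then: (1) $D_1+D_2+D_3+D_4=\sum_{v\in V}|\mathcal{E}(v)|$; (2) $D_3\ge (r-1)D_1$; (3) if $c$ is a Nash equilibrium of the game with NM players, then $D_1\ge (k-1)D_2$.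
   Context: A hypergraph $H=(V,\mathcal{E})$ consists of a finite set $V$ of vertices and a finite set $\mathcal{E}$ of nonempty subsets of $V$; it is $r$-minimal if $|e|\ge r$ for all $e\in\mathcal{E}$. A $k$-coloring is a map $c:V\to[k]$; for $S\subseteq V$, $c(S)$ is the set of colors of vertices of $S$. $\mathcal{E}(v)=\{e\in\mathcal{E}: v\in e\}$. With NM (non-monochromatic seeking) players, $u_v(c)=|\{e\in\mathcal{E}(v): |c(e)|>1\}|$. A coloring $c$ is a Nash equilibrium if $u_v(c)\ge u_v(c_{-v},i)$ for all $v\in V$, $i\in[k]$, where $(c_{-v},i)$ is $c$ with the color of $v$ replaced by $i$. *)

theory Defs
  imports Main
begin

definition hypergraph :: "'a set \<Rightarrow> 'a set set \<Rightarrow> bool" where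
  "hypergraph V E \<longleftrightarrow> finite V \<and> finite E \<and> (\<forall>e\<in>E. e \<noteq> {} \<and> e \<subseteq> V)"

definition r_minimal :: "nat \<Rightarrow> 'a set set \<Rightarrow> bool" where
  "r_minimal r E \<longleftrightarrow> (\<forall>e\<in>E. card e \<ge> r)"

definition k_coloring :: "nat \<Rightarrow> 'a set \<Rightarrow> ('a \<Rightarrow> nat) \<Rightarrow> bool" where
  "k_coloring k V c \<longleftrightarrow> (\<forall>v\<in>V. c v \<in> {1..k})"

definition edges_at :: "'a set set \<Rightarrow> 'a \<Rightarrow> 'a set set" where
  "edges_at E v = {e\<in>E. v \<in> e}"

text \<open>Utility of an NM (non-monochromatic seeking) player.\<close>
definition u_NM :: "'a set set \<Rightarrow> ('a \<Rightarrow> nat) \<Rightarrow> 'a \<Rightarrow> nat" where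
  "u_NM E c v = card {e \<in> edges_at E v. card (c ` e) > 1}"

definition nash_NM :: "nat \<Rightarrow> 'a set \<Rightarrow> 'a set set \<Rightarrow> ('a \<Rightarrow> nat) \<Rightarrow> bool" where
  "nash_NM k V E c \<longleftrightarrow> (\<forall>v\<in>V. \<forall>i\<in>{1..k}. u_NM E c v \<ge> u_NM E (c(v := i)) v)"

definition d1i :: "'a set set \<Rightarrow> ('a \<Rightarrow> nat) \<Rightarrow> 'a \<Rightarrow> nat \<Rightarrow> nat" where
  "d1i E c v i = card {e \<in> edges_at E v. card (c ` e) = 2 \<and> c ` (e - {v}) = {i}}"

definition d1 :: "nat \<Rightarrow> 'a set set \<Rightarrow> ('a \<Rightarrow> nat) \<Rightarrow> 'a \<Rightarrow> nat" where
  "d1 k E c v = (\<Sum>i\<in>{1..k} - {c v}. d1i E c v i)"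

definition d2 :: "'a set set \<Rightarrow> ('a \<Rightarrow> nat) \<Rightarrow> 'a \<Rightarrow> nat" where
  "d2 E c v = card {e \<in> edges_at E v. card (c ` e) = 1}"

definition d3 :: "'a set set \<Rightarrow> ('a \<Rightarrow> nat) \<Rightarrow> 'a \<Rightarrow> nat" where
  "d3 E c v = card {e \<in> edges_at E v. card (c ` e) = 2 \<and>
                    (\<exists>v'\<in>e. v' \<noteq> v \<and> card (c ` (e - {v'})) = 1)}"

definition d4 :: "nat \<Rightarrow> 'a set set \<Rightarrow> ('a \<Rightarrow> nat) \<Rightarrow> 'a \<Rightarrow> int" where
  "d4 k E c v = int (card (edges_at E v)) - int (d1 k E c v + d2 E c v + d3 E c v)"

end

theory Submission
  imports Defs
begin

lemma card_filter_sum: "finite A \<Longrightarrow> card {x\<in>A. P x} = (\<Sum>x\<in>A. if P x then 1 else 0)"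
  by (simp add: sum.inter_filter[symmetric])

lemma dc:
  assumes "finite V" "finite E" "\<forall>e\<in>E. e \<subseteq> V"
  shows "(\<Sum>v\<in>V. card {e\<in>E. v\<in>e \<and> Q v e}) = (\<Sum>e\<in>E. card {v\<in>e. Q v e})"
proof -
  have "(\<Sum>v\<in>V. card {e\<in>E. v\<in>e \<and> Q v e}) = (\<Sum>v\<in>V. \<Sum>e\<in>E. if v\<in>e \<and> Q v e then 1 else 0)"
    using assms by (simp add: card_filter_sum)
  also have "\<dots> = (\<Sum>e\<in>E. \<Sum>v\<in>V. if v\<in>e \<and> Q v e then 1 else 0)"
    by (rule sum.swap)
  also have "\<dots> = (\<Sum>e\<in>E. card {v\<in>e. Q v e})"
  proof (rule sum.cong[OF refl])
    fix e assume e: "e \<in> E"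
    have "(\<Sum>v\<in>V. if v\<in>e \<and> Q v e then 1 else 0) = card {v\<in>V. v\<in>e \<and> Q v e}"
      using assms by (simp add: card_filter_sum)
    also have "{v\<in>V. v\<in>e \<and> Q v e} = {v\<in>e. Q v e}" using assms e by blast
    finally show "(\<Sum>v\<in>V. if v\<in>e \<and> Q v e then 1 else 0) = card {v\<in>e. Q v e}" .
  qed
  finally show ?thesis .
qed

definition P1 :: "('a \<Rightarrow> nat) \<Rightarrow> 'a \<Rightarrow> 'a set \<Rightarrow> bool" where
  "P1 c v e \<longleftrightarrow> card (c ` e) = 2 \<and> card (c ` (e - {v})) = 1"

lemma d1_eq:
  assumes H: "hypergraph V E" and kc: "k_coloring k V c" and v: "v \<in> V"
  shows "d1 k E c v = card {e\<in>E. v \<in> e \<and> P1 c v e}"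
proof -
  have fE: "finite E" using H by (simp add: hypergraph_def)
  have fA: "finite (edges_at E v)" using fE by (simp add: edges_at_def)
  have "d1 k E c v = (\<Sum>i\<in>{1..k} - {c v}. \<Sum>e\<in>edges_at E v.
          if card (c ` e) = 2 \<and> c ` (e - {v}) = {i} then 1 else 0)"
    unfolding d1_def d1i_def using fA by (simp add: card_filter_sum)
  also have "\<dots> = (\<Sum>e\<in>edges_at E v. \<Sum>i\<in>{1..k} - {c v}.
          if card (c ` e) = 2 \<and> c ` (e - {v}) = {i} then 1 else 0)"
    by (rule sum.swap)
  also have "\<dots> = (\<Sum>e\<in>edges_at E v. if P1 c v e then 1 else 0)"
  proof (rule sum.cong[OF refl])
    fix e assume e: "e \<in> edges_at E v"
    have eV: "e \<subseteq> V" and ve: "v \<in> e" using e H by (auto simp: edges_at_def hypergraph_def)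
    have "(\<Sum>i\<in>{1..k} - {c v}. if card (c ` e) = 2 \<and> c ` (e - {v}) = {i} then 1 else 0)
        = card {i\<in>{1..k} - {c v}. card (c ` e) = 2 \<and> c ` (e - {v}) = {i}}"
      by (rule card_filter_sum[symmetric]) simp
    also have "\<dots> = (if P1 c v e then 1 else 0)"
    proof (cases "P1 c v e")
      case True
      then obtain j where j: "c ` (e - {v}) = {j}" and c2: "card (c ` e) = 2"
        unfolding P1_def by (auto simp: card_Suc_eq)
      have ce: "c ` e = insert (c v) {j}" using j ve by auto
      have jne: "j \<noteq> c v" using ce c2 by auto
      obtain w where "w \<in> e - {v}" using j by auto
      hence "c w = j" "w \<in> V" using j eV by auto
      hence jk: "j \<in> {1..k}" using kc by (auto simp: k_coloring_def)
      have "{i\<in>{1..k} - {c v}. card (c ` e) = 2 \<and> c ` (e - {v}) = {i}} = {j}"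
        using j c2 jne jk by auto
      then show ?thesis using True by simp
    next
      case False
      have "{i\<in>{1..k} - {c v}. card (c ` e) = 2 \<and> c ` (e - {v}) = {i}} = {}"
        using False unfolding P1_def by auto
      then show ?thesis using False by simp
    qed
    finally show "(\<Sum>i\<in>{1..k} - {c v}. if card (c ` e) = 2 \<and> c ` (e - {v}) = {i} then 1 else 0)
        = (if P1 c v e then 1 else (0::nat))" .
  qed
  also have "\<dots> = card {e\<in>edges_at E v. P1 c v e}"
    using fA by (simp add: card_filter_sum)
  also have "{e\<in>edges_at E v. P1 c v e} = {e\<in>E. v \<in> e \<and> P1 c v e}"
    by (auto simp: edges_at_def)
  finally show ?thesis .
qed

lemma P1_unique:
  assumes "P1 c v e" "P1 c u e" "u \<in> e" "v \<in> e" "card e \<ge> 3"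
  shows "u = v"
proof (rule ccontr)
  assume uv: "u \<noteq> v"
  obtain i where i: "c ` (e - {v}) = {i}" using assms(1) unfolding P1_def by (auto simp: card_Suc_eq)
  obtain j where j: "c ` (e - {u}) = {j}" using assms(2) unfolding P1_def by (auto simp: card_Suc_eq)
  have fe: "finite e" using assms(5) by (metis card.infinite not_numeral_le_zero)
  have "card (e - {u, v}) \<ge> 1"
  proof -
    have "card (e - {u,v}) = card e - card {u,v}" using assms(3,4) fe by (simp add: card_Diff_subset)
    thus ?thesis using uv assms(5) by simp
  qed
  then obtain w where w: "w \<in> e" "w \<noteq> u" "w \<noteq> v"
    by (metis DiffE One_nat_def card.empty insertCI not_one_le_zero subsetI subset_empty)
  have "c w = i" "c w = j" using w i j by auto
  moreover have "c u = i" using i assms(3) uv by auto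
  moreover have "c v = j" using j assms(4) uv by auto
  ultimately have "c ` e = {i}" using i by auto
  thus False using assms(1) unfolding P1_def by simp
qed

lemma nash_vertex:
  assumes H: "hypergraph V E" and rm: "r_minimal r E" and r3: "r \<ge> 3"
    and v: "v \<in> V" and i: "i \<noteq> c v"
    and N: "u_NM E c v \<ge> u_NM E (c(v := i)) v"
  shows "d1i E c v i \<ge> d2 E c v"
proof -
  have fE: "finite E" using H by (simp add: hypergraph_def)
  have fA: "finite (edges_at E v)" using fE by (simp add: edges_at_def)
  define c' where "c' = c(v := i)"
  define A where "A = {e \<in> edges_at E v. card (c ` e) > 1}"
  define B where "B = {e \<in> edges_at E v. card (c' ` e) > 1}"
  define D where "D = {e \<in> edges_at E v. card (c ` e) = 2 \<and> c ` (e - {v}) = {i}}"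
  define M where "M = {e \<in> edges_at E v. card (c ` e) = 1}"
  have fin: "finite A" "finite B" "finite D" "finite M" using fA
    by (auto simp: A_def B_def D_def M_def)
  have DA: "D \<subseteq> A" by (auto simp: D_def A_def)
  have sub: "(A - D) \<union> M \<subseteq> B"
  proof
    fix e assume e: "e \<in> (A - D) \<union> M"
    hence eE: "e \<in> edges_at E v" by (auto simp: A_def M_def)
    have eV: "e \<subseteq> V" and ve: "v \<in> e" and ce3: "card e \<ge> 3" and ee: "e \<in> E"
      using eE H rm r3 by (auto simp: edges_at_def hypergraph_def r_minimal_def)
    have fe: "finite e" using eV H finite_subset by (auto simp: hypergraph_def)
    have fce: "finite (c' ` e)" using fe by simp
    have c'e: "c' ` e = insert i (c ` (e - {v}))" using ve by (auto simp: c'_def)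
    have ne: "e - {v} \<noteq> {}"
    proof
      assume "e - {v} = {}"
      hence "e \<subseteq> {v}" by auto
      hence "card e \<le> card {v}" by (intro card_mono) auto
      thus False using ce3 by simp
    qed
    show "e \<in> B"
    proof (cases "e \<in> M")
      case True
      hence "card (c ` e) = 1" by (simp add: M_def)
      then obtain a where a: "c ` e = {a}" by (rule card_1_singletonE)
      have "c v \<in> c ` e" using ve by blast
      hence "a = c v" using a by simp
      obtain w where w: "w \<in> e - {v}" using ne by blast
      have "c w \<in> c ` e" using w by blast
      hence "c w = c v" using a \<open>a = c v\<close> by simp
      have cwi: "c w \<in> c ` (e - {v})" using w by blast
      have "i \<in> c' ` e" unfolding c'e by simp
      moreover have "c v \<in> c' ` e" unfolding c'e using cwi \<open>c w = c v\<close> by simp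
      ultimately have "{i, c v} \<subseteq> c' ` e" by simp
      hence "card {i, c v} \<le> card (c' ` e)" using fce card_mono by blast
      moreover have "card {i, c v} = 2" using i by simp
      ultimately have "card (c' ` e) > 1" by simp
      thus ?thesis using eE unfolding B_def by blast
    next
      case False
      hence eA: "e \<in> A" and eD: "e \<notin> D" using e by auto
      show ?thesis
      proof (rule ccontr)
        assume "e \<notin> B"
        hence "card (c' ` e) \<le> 1" using eE by (auto simp: B_def)
        hence "card (c' ` e) \<le> Suc 0" by simp
        hence all: "\<forall>x\<in>c' ` e. \<forall>y\<in>c' ` e. x = y" using card_le_Suc0_iff_eq[OF fce] by blast
        have "c ` (e - {v}) \<subseteq> {i}"
        proof
          fix x assume "x \<in> c ` (e - {v})"
          hence "x \<in> c' ` e" "i \<in> c' ` e" using c'e by auto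
          thus "x \<in> {i}" using all by blast
        qed
        hence ci: "c ` (e - {v}) = {i}" using ne by blast
        have "c ` e = insert (c v) (c ` (e - {v}))" using ve by blast
        hence "c ` e = {c v, i}" using ci by simp
        hence "card (c ` e) = 2" using i by simp
        thus False using eD eE ci by (simp add: D_def)
      qed
    qed
  qed
  have disj: "(A - D) \<inter> M = {}" by (auto simp: A_def M_def)
  have "card B \<ge> card ((A - D) \<union> M)" using sub fin card_mono by blast
  also have "card ((A - D) \<union> M) = card (A - D) + card M"
    using disj fin by (simp add: card_Un_disjoint)
  also have "card (A - D) = card A - card D" using DA fin by (simp add: card_Diff_subset)
  finally have "card B \<ge> card A - card D + card M" .
  moreover have "card A \<ge> card B" using N by (simp add: u_NM_def A_def B_def c'_def)
  moreover have "card D \<le> card A" using DA fin card_mono by blast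
  ultimately have "card D \<ge> card M" by linarith
  thus ?thesis by (simp add: d1i_def d2_def D_def M_def)
qed

theorem mainTheorem4:
  fixes V :: "'a set" and E :: "'a set set" and c :: "'a \<Rightarrow> nat" and r k :: nat
  assumes "r \<ge> 3" and "k \<ge> 2"
    and "hypergraph V E" and "r_minimal r E"
    and "k_coloring k V c"
  shows "int (\<Sum>v\<in>V. d1 k E c v) + int (\<Sum>v\<in>V. d2 E c v) + int (\<Sum>v\<in>V. d3 E c v)
           + (\<Sum>v\<in>V. d4 k E c v) = int (\<Sum>v\<in>V. card (edges_at E v))
         \<and> (\<Sum>v\<in>V. d3 E c v) \<ge> (r - 1) * (\<Sum>v\<in>V. d1 k E c v)
         \<and> (nash_NM k V E c \<longrightarrow> (\<Sum>v\<in>V. d1 k E c v) \<ge> (k - 1) * (\<Sum>v\<in>V. d2 E c v))"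
proof (intro conjI impI)
  have fV: "finite V" and fE: "finite E" and EV: "\<forall>e\<in>E. e \<subseteq> V"
    using assms(3) by (auto simp: hypergraph_def)
  show "int (\<Sum>v\<in>V. d1 k E c v) + int (\<Sum>v\<in>V. d2 E c v) + int (\<Sum>v\<in>V. d3 E c v)
           + (\<Sum>v\<in>V. d4 k E c v) = int (\<Sum>v\<in>V. card (edges_at E v))"
    by (simp add: d4_def sum_subtractf of_nat_sum sum.distrib)
  define P3 where "P3 = (\<lambda>w e. card (c ` e) = 2 \<and> (\<exists>v'\<in>e. v' \<noteq> w \<and> card (c ` (e - {v'})) = 1))"
  have D1: "(\<Sum>v\<in>V. d1 k E c v) = (\<Sum>e\<in>E. card {v\<in>e. P1 c v e})"
    using d1_eq[OF assms(3,5)] dc[OF fV fE EV, of "P1 c"] by simp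
  have D3: "(\<Sum>v\<in>V. d3 E c v) = (\<Sum>e\<in>E. card {v\<in>e. P3 v e})"
  proof -
    have "(\<Sum>v\<in>V. d3 E c v) = (\<Sum>v\<in>V. card {e\<in>E. v\<in>e \<and> P3 v e})"
      by (rule sum.cong[OF refl]) (simp add: d3_def edges_at_def P3_def conj_assoc)
    also have "\<dots> = (\<Sum>e\<in>E. card {v\<in>e. P3 v e})" by (rule dc[OF fV fE EV])
    finally show ?thesis .
  qed
  have "(r - 1) * (\<Sum>e\<in>E. card {v\<in>e. P1 c v e}) \<le> (\<Sum>e\<in>E. card {v\<in>e. P3 v e})"
    unfolding sum_distrib_left
  proof (rule sum_mono)
    fix e assume eE: "e \<in> E"
    have ce: "card e \<ge> r" using eE assms(4) by (auto simp: r_minimal_def)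
    have fe: "finite e" using eE EV fV finite_subset by blast
    show "(r - 1) * card {v\<in>e. P1 c v e} \<le> card {v\<in>e. P3 v e}"
    proof (cases "{v\<in>e. P1 c v e} = {}")
      case True then show ?thesis by (metis card.empty mult_0_right zero_le)
    next
      case False
      then obtain v where v: "v \<in> e" "P1 c v e" by auto
      have ce3: "card e \<ge> 3" using ce assms(1) by linarith
      have "{v\<in>e. P1 c v e} = {v}"
      proof (rule set_eqI)
        fix u
        show "u \<in> {v\<in>e. P1 c v e} \<longleftrightarrow> u \<in> {v}"
        proof
          assume "u \<in> {v\<in>e. P1 c v e}"
          hence "P1 c u e" "u \<in> e" by auto
          hence "v = u" using P1_unique[OF \<open>P1 c u e\<close> v(2) v(1) \<open>u \<in> e\<close> ce3] by simp
          thus "u \<in> {v}" by simp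
        next
          assume "u \<in> {v}" thus "u \<in> {v\<in>e. P1 c v e}" using v by simp
        qed
      qed
      moreover have "e - {v} \<subseteq> {v\<in>e. P3 v e}"
      proof
        fix w assume w: "w \<in> e - {v}"
        have c2: "card (c ` e) = 2" and c1: "card (c ` (e - {v})) = 1" using v(2) unfolding P1_def by auto
        have vw: "v \<noteq> w" using w by auto
        have "P3 w e" unfolding P3_def
          by (rule conjI[OF c2], rule bexI[of _ v]) (use c1 v(1) vw in auto)
        thus "w \<in> {v\<in>e. P3 v e}" using w by simp
      qed
      hence "card (e - {v}) \<le> card {v\<in>e. P3 v e}" using fe by (simp add: card_mono)
      moreover have "card (e - {v}) = card e - 1" using v fe by simp
      ultimately show ?thesis using ce by simp
    qed
  qed
  then show "(\<Sum>v\<in>V. d3 E c v) \<ge> (r - 1) * (\<Sum>v\<in>V. d1 k E c v)" using D1 D3 by simp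
  assume N: "nash_NM k V E c"
  have "(k - 1) * (\<Sum>v\<in>V. d2 E c v) \<le> (\<Sum>v\<in>V. d1 k E c v)"
    unfolding sum_distrib_left
  proof (rule sum_mono)
    fix v assume v: "v \<in> V"
    have cv: "c v \<in> {1..k}" using v assms(5) by (auto simp: k_coloring_def)
    have "(\<Sum>i\<in>{1..k} - {c v}. d2 E c v) \<le> d1 k E c v"
      unfolding d1_def
    proof (rule sum_mono)
      fix i assume i: "i \<in> {1..k} - {c v}"
      show "d2 E c v \<le> d1i E c v i"
      proof -
        have ik: "i \<in> {1..k}" and icv: "i \<noteq> c v" using i by auto
        have "u_NM E c v \<ge> u_NM E (c(v := i)) v" using N v ik unfolding nash_NM_def by blast
        thus ?thesis using nash_vertex[of V E r v i c] assms(3,4,1) v icv by blast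
      qed
    qed
    moreover have "card ({1..k} - {c v}) = k - 1" using cv by simp
    ultimately show "(k - 1) * d2 E c v \<le> d1 k E c v" by simp
  qed
  then show "(\<Sum>v\<in>V. d1 k E c v) \<ge> (k - 1) * (\<Sum>v\<in>V. d2 E c v)" by simp
qed

end
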